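(* Let $Q=\{x\in\mathbb{R}^{n+1}:\sum_{i=1}^{n+1}x_i^2/a_i=1\}$ with $0<a_1<\dots<a_{n+1}$. If a nonsingular periodic billiard trajectory inside $Q$ has odd period, then its first caustic $Q_{\lambda_1}$ is an ellipsoid, i.e. $\lambda_1\in(0,a_1)$. In other words, among all nonsingular billiard trajectories inside $Q$, only those with an ellipsoid as caustic can have odd period.
   Context: Confocal quadrics: $Q_\mu=\{\sum x_i^2/(a_i-\mu)=1\}$; every line of a billiard trajectory inside $Q$ is tangent to $n$ confocal quadrics $Q_{\lambda_1},\ldots,Q_{\lambda_n}$ (caustics), $\lambda_1<\dots<\lambda_n$. The trajectory is nonsingular when $\lambda$ lies in $\{0<\lambda_1<\dots<\lambda_n,\ \lambda_i\in(a_{i-1},a_i)\cup(a_i,a_{i+1})\}$, $a_0=0$. $Q_\mu$ is an ellipsoid exactly when $0<\mu<a_1$. *)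

theory Defs
  imports Complex_Main
begin

text \<open>Points of R^(n+1) are represented as functions nat => real whose
  relevant coordinates are indexed by 1..n+1 (all other coordinates are 0).
  The semi-axes parameters are a 1 < ... < a (n+1).\<close>

definition ipr :: "nat \<Rightarrow> (nat \<Rightarrow> real) \<Rightarrow> (nat \<Rightarrow> real) \<Rightarrow> real" where
  "ipr n x y = (\<Sum>i=1..n+1. x i * y i)"

definition is_point :: "nat \<Rightarrow> (nat \<Rightarrow> real) \<Rightarrow> bool" where
  "is_point n x \<longleftrightarrow> (\<forall>i. i \<notin> {1..n+1} \<longrightarrow> x i = 0)"

definition confocal :: "nat \<Rightarrow> (nat \<Rightarrow> real) \<Rightarrow> real \<Rightarrow> (nat \<Rightarrow> real) set" where
  "confocal n a \<mu> = {x. is_point n x \<and> (\<Sum>i=1..n+1. (x i)\<^sup>2 / (a i - \<mu>)) = 1}"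

text \<open>Tangency of the line {x + t v} to the quadric Q_mu (mu not one of the a_i):
  the quadratic equation in t for the intersection has vanishing discriminant.\<close>
definition line_tangent :: "nat \<Rightarrow> (nat \<Rightarrow> real) \<Rightarrow> real \<Rightarrow> (nat \<Rightarrow> real) \<Rightarrow> (nat \<Rightarrow> real) \<Rightarrow> bool" where
  "line_tangent n a \<mu> x v \<longleftrightarrow>
     (\<forall>i\<in>{1..n+1}. a i \<noteq> \<mu>) \<and>
     (\<Sum>i=1..n+1. x i * v i / (a i - \<mu>))\<^sup>2
       = (\<Sum>i=1..n+1. (v i)\<^sup>2 / (a i - \<mu>)) * ((\<Sum>i=1..n+1. (x i)\<^sup>2 / (a i - \<mu>)) - 1)"

definition caustic_params :: "nat \<Rightarrow> (nat \<Rightarrow> real) \<Rightarrow> (nat \<Rightarrow> real) \<Rightarrow> (nat \<Rightarrow> real) \<Rightarrow> real set" where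
  "caustic_params n a x y = {\<mu>. line_tangent n a \<mu> x (\<lambda>i. y i - x i)}"

text \<open>Billiard trajectory inside Q = Q_0: consecutive vertices on Q and distinct,
  and reflection law at every vertex: the outgoing direction is a positive multiple
  of the mirror image of the incoming direction in the tangent hyperplane
  (normal vector N_i = x_i / a_i).\<close>
definition billiard_trajectory :: "nat \<Rightarrow> (nat \<Rightarrow> real) \<Rightarrow> (nat \<Rightarrow> nat \<Rightarrow> real) \<Rightarrow> bool" where
  "billiard_trajectory n a p \<longleftrightarrow>
     (\<forall>k. p k \<in> confocal n a 0) \<and>
     (\<forall>k. p (Suc k) \<noteq> p k) \<and>
     (\<forall>k. let u = (\<lambda>i. p (Suc k) i - p k i);
              w = (\<lambda>i. p (Suc (Suc k)) i - p (Suc k) i);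
              N = (\<lambda>i. p (Suc k) i / a i)
          in \<exists>c>0. \<forall>i\<in>{1..n+1}. w i = c * (u i - 2 * ipr n u N / ipr n N N * N i))"

end

theory Submission
  imports Defs "HOL-Computational_Algebra.Polynomial"
begin


lemma lagrange:
  fixes x v d :: "nat \<Rightarrow> real"
  assumes "finite S" "\<And>i. i \<in> S \<Longrightarrow> d i \<noteq> 0"
  shows "(\<Sum>i\<in>S. \<Sum>j\<in>S. (x i * v j - x j * v i)^2 / (d i * d j))
     = 2 * ((\<Sum>i\<in>S. (v i)^2 / d i) * (\<Sum>i\<in>S. (x i)^2 / d i) - (\<Sum>i\<in>S. x i * v i / d i)^2)"
proof -
  have e: "(x i * v j - x j * v i)^2 / (d i * d j) =
     (x i)^2 / d i * ((v j)^2 / d j) + (v i)^2 / d i * ((x j)^2 / d j) - 2 * ((x i * v i / d i) * (x j * v j / d j))"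
    if "i \<in> S" "j \<in> S" for i j using assms(2)[OF that(1)] assms(2)[OF that(2)]
    by (simp add: field_simps power2_eq_square)
  have "(\<Sum>i\<in>S. \<Sum>j\<in>S. (x i * v j - x j * v i)^2 / (d i * d j))
     = (\<Sum>i\<in>S. \<Sum>j\<in>S. (x i)^2 / d i * ((v j)^2 / d j) + (v i)^2 / d i * ((x j)^2 / d j) - 2 * ((x i * v i / d i) * (x j * v j / d j)))"
    using e by (intro sum.cong refl) auto
  also have "\<dots> = (\<Sum>i\<in>S. (x i)^2 / d i) * (\<Sum>j\<in>S. (v j)^2 / d j) + (\<Sum>i\<in>S. (v i)^2 / d i) * (\<Sum>j\<in>S. (x j)^2 / d j)
     - 2 * ((\<Sum>i\<in>S. x i * v i / d i) * (\<Sum>j\<in>S. x j * v j / d j))"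
    unfolding sum_product by (simp only: sum_distrib_left sum_subtractf sum.distrib)
  finally show ?thesis by (simp add: power2_eq_square algebra_simps)
qed

definition PP :: "nat set \<Rightarrow> (nat \<Rightarrow> real) \<Rightarrow> (nat \<Rightarrow> real) \<Rightarrow> (nat \<Rightarrow> real) \<Rightarrow> real poly" where
  "PP I a x v = (\<Sum>i\<in>I. smult ((v i)^2) (\<Prod>k\<in>I-{i}. [:a k, -1:]))
     - (\<Sum>i\<in>I. \<Sum>j\<in>I-{i}. smult ((x i * v j - x j * v i)^2 / 2) (\<Prod>k\<in>I-{i,j}. [:a k, -1:]))"

lemma poly_PP: "poly (PP I a x v) \<mu> = (\<Sum>i\<in>I. (v i)^2 * (\<Prod>k\<in>I-{i}. a k - \<mu>))
     - (\<Sum>i\<in>I. \<Sum>j\<in>I-{i}. (x i * v j - x j * v i)^2 / 2 * (\<Prod>k\<in>I-{i,j}. a k - \<mu>))"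
  by (simp add: PP_def poly_sum poly_prod)

lemma deg_prod: "finite S \<Longrightarrow> degree (\<Prod>k\<in>S. [:a k, -1::real:]) \<le> card S"
proof -
  assume f: "finite S"
  have "degree (\<Prod>k\<in>S. [:a k, -1::real:]) \<le> sum (degree \<circ> (\<lambda>k. [:a k, -1::real:])) S"
    by (rule degree_prod_sum_le[OF f])
  also have "\<dots> = card S" by simp
  finally show ?thesis .
qed

lemma degree_PP:
  assumes "finite I" "card I = Suc n"
  shows "degree (PP I a x v) \<le> n"
  unfolding PP_def
proof (rule degree_diff_le)
  show "degree (\<Sum>i\<in>I. smult ((v i)^2) (\<Prod>k\<in>I-{i}. [:a k, -1:])) \<le> n"
  proof (rule degree_sum_le[OF assms(1)])
    fix i assume "i \<in> I"
    then have "card (I - {i}) = n" using assms by simp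
    then show "degree (smult ((v i)^2) (\<Prod>k\<in>I-{i}. [:a k, -1:])) \<le> n"
      using deg_prod[of "I-{i}" a] assms(1) degree_smult_le[of "(v i)^2" "(\<Prod>k\<in>I-{i}. [:a k, -1:])"]
      by simp
  qed
  show "degree (\<Sum>i\<in>I. \<Sum>j\<in>I-{i}. smult ((x i * v j - x j * v i)^2 / 2) (\<Prod>k\<in>I-{i,j}. [:a k, -1:])) \<le> n"
  proof (intro degree_sum_le)
    fix i j assume "i \<in> I" "j \<in> I - {i}"
    have "card (I - {i,j}) \<le> card (I - {i})" using assms by (intro card_mono) auto
    then have "card (I - {i,j}) \<le> n" using assms \<open>i \<in> I\<close> by simp
    then show "degree (smult ((x i * v j - x j * v i)^2 / 2) (\<Prod>k\<in>I-{i,j}. [:a k, -1:])) \<le> n"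
      using deg_prod[of "I-{i,j}" a] assms(1) degree_smult_le[of _ "(\<Prod>k\<in>I-{i,j}. [:a k, -1:])"]
      by (meson finite_Diff le_trans)
  qed (use assms in auto)
qed



lemma prod_rem1:
  fixes d :: "nat \<Rightarrow> real"
  assumes "finite I" "i \<in> I" "d i \<noteq> 0"
  shows "(\<Prod>k\<in>I-{i}. d k) = (\<Prod>k\<in>I. d k) / d i"
  using prod.remove[OF assms(1,2), of d] assms(3) by simp

lemma prod_rem2:
  fixes d :: "nat \<Rightarrow> real"
  assumes "finite I" "i \<in> I" "j \<in> I" "i \<noteq> j" "d i \<noteq> 0" "d j \<noteq> 0"
  shows "(\<Prod>k\<in>I-{i,j}. d k) = (\<Prod>k\<in>I. d k) / (d i * d j)"
proof -
  have "I - {i,j} = (I - {i}) - {j}" by auto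
  then have "(\<Prod>k\<in>I-{i,j}. d k) = (\<Prod>k\<in>I-{i}. d k) / d j"
    using prod_rem1[of "I-{i}" j d] assms by simp
  also have "\<dots> = (\<Prod>k\<in>I. d k) / (d i * d j)" using prod_rem1[of I i d] assms by simp
  finally show ?thesis .
qed

lemma poly_PP_nonpole:
  assumes fin: "finite I" and np: "\<And>k. k \<in> I \<Longrightarrow> a k \<noteq> \<mu>"
  shows "poly (PP I a x v) \<mu> = (\<Prod>k\<in>I. a k - \<mu>) *
     ((\<Sum>i\<in>I. x i * v i / (a i - \<mu>))^2 - (\<Sum>i\<in>I. (v i)^2 / (a i - \<mu>)) * ((\<Sum>i\<in>I. (x i)^2 / (a i - \<mu>)) - 1))"
proof -
  define d where "d k = a k - \<mu>" for k
  define D where "D = (\<Prod>k\<in>I. d k)"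
  have dnz: "k \<in> I \<Longrightarrow> d k \<noteq> 0" for k using np by (auto simp: d_def)
  have s1: "(\<Sum>i\<in>I. (v i)^2 * (\<Prod>k\<in>I-{i}. a k - \<mu>)) = D * (\<Sum>i\<in>I. (v i)^2 / d i)"
    unfolding sum_distrib_left
    by (intro sum.cong refl) (simp add: prod_rem1[OF fin _ dnz, unfolded d_def] D_def d_def)
  have s2: "(\<Sum>i\<in>I. \<Sum>j\<in>I-{i}. (x i * v j - x j * v i)^2 / 2 * (\<Prod>k\<in>I-{i,j}. a k - \<mu>))
     = D / 2 * (\<Sum>i\<in>I. \<Sum>j\<in>I. (x i * v j - x j * v i)^2 / (d i * d j))"
  proof -
    have "(\<Sum>i\<in>I. \<Sum>j\<in>I-{i}. (x i * v j - x j * v i)^2 / 2 * (\<Prod>k\<in>I-{i,j}. a k - \<mu>))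
       = (\<Sum>i\<in>I. \<Sum>j\<in>I-{i}. D / 2 * ((x i * v j - x j * v i)^2 / (d i * d j)))"
      apply (intro sum.cong refl)
      using prod_rem2[OF fin _ _ _ dnz dnz] by (simp add: D_def d_def)
    also have "\<dots> = (\<Sum>i\<in>I. \<Sum>j\<in>I. D / 2 * ((x i * v j - x j * v i)^2 / (d i * d j)))"
    proof (rule sum.cong[OF refl])
      fix i assume "i \<in> I"
      show "(\<Sum>j\<in>I-{i}. D / 2 * ((x i * v j - x j * v i)^2 / (d i * d j))) = (\<Sum>j\<in>I. D / 2 * ((x i * v j - x j * v i)^2 / (d i * d j)))"
        using sum.remove[OF fin \<open>i \<in> I\<close>, of "\<lambda>j. D / 2 * ((x i * v j - x j * v i)^2 / (d i * d j))"] by simp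
    qed
    finally show ?thesis by (simp add: sum_distrib_left)
  qed
  have "poly (PP I a x v) \<mu> = D * (\<Sum>i\<in>I. (v i)^2 / d i) - D / 2 * (2 * ((\<Sum>i\<in>I. (v i)^2 / d i) * (\<Sum>i\<in>I. (x i)^2 / d i) - (\<Sum>i\<in>I. x i * v i / d i)^2))"
    unfolding poly_PP s1 s2 by (simp only: lagrange[OF fin dnz])
  then show ?thesis unfolding D_def d_def by (simp add: algebra_simps)
qed

lemma poly_PP_a1:
  assumes fin: "finite I" and one: "1 \<in> I" and np: "\<And>k. k \<in> I - {1} \<Longrightarrow> a k \<noteq> a 1"
  shows "poly (PP I a x v) (a 1) = (\<Prod>k\<in>I-{1}. a k - a 1) *
     ((v 1)^2 - (\<Sum>j\<in>I-{1}. (x 1 * v j - x j * v 1)^2 / (a j - a 1)))"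
proof -
  define J where "J = I - {1}"
  define d where "d k = a k - a 1" for k
  define E where "E = (\<Prod>k\<in>J. d k)"
  have finJ: "finite J" using fin by (simp add: J_def)
  have dnz: "k \<in> J \<Longrightarrow> d k \<noteq> 0" for k using np by (auto simp: d_def J_def)
  have z1: "(\<Prod>k\<in>S. a k - a 1) = 0" if "1 \<in> S" "finite S" for S
    using that by (intro prod_zero) auto
  have s1: "(\<Sum>i\<in>I. (v i)^2 * (\<Prod>k\<in>I-{i}. a k - a 1)) = (v 1)^2 * E"
  proof -
    have "(\<Sum>i\<in>I. (v i)^2 * (\<Prod>k\<in>I-{i}. a k - a 1)) = (v 1)^2 * (\<Prod>k\<in>I-{1}. a k - a 1) + (\<Sum>i\<in>J. (v i)^2 * (\<Prod>k\<in>I-{i}. a k - a 1))"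
      unfolding J_def by (rule sum.remove[OF fin one])
    also have "(\<Sum>i\<in>J. (v i)^2 * (\<Prod>k\<in>I-{i}. a k - a 1)) = 0"
      using fin one by (intro sum.neutral) (auto simp: J_def z1)
    finally show ?thesis by (simp add: E_def J_def d_def)
  qed
  define c where "c i j = (x i * v j - x j * v i)^2" for i j
  have csym: "c i j = c j i" for i j by (simp add: c_def power2_eq_square algebra_simps)
  have s2: "(\<Sum>i\<in>I. \<Sum>j\<in>I-{i}. c i j / 2 * (\<Prod>k\<in>I-{i,j}. a k - a 1))
      = (\<Sum>j\<in>J. c 1 j * (E / d j))"
  proof -
    have A: "(\<Sum>i\<in>I. \<Sum>j\<in>I-{i}. c i j / 2 * (\<Prod>k\<in>I-{i,j}. a k - a 1))
       = (\<Sum>j\<in>J. c 1 j / 2 * (\<Prod>k\<in>I-{1,j}. a k - a 1)) + (\<Sum>i\<in>J. \<Sum>j\<in>I-{i}. c i j / 2 * (\<Prod>k\<in>I-{i,j}. a k - a 1))"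
      unfolding J_def by (rule sum.remove[OF fin one])
    have B: "(\<Sum>j\<in>I-{i}. c i j / 2 * (\<Prod>k\<in>I-{i,j}. a k - a 1)) = c 1 i / 2 * (\<Prod>k\<in>I-{1,i}. a k - a 1)"
      if "i \<in> J" for i
    proof -
      have i1: "1 \<in> I - {i}" using that one by (auto simp: J_def)
      have "(\<Sum>j\<in>I-{i}. c i j / 2 * (\<Prod>k\<in>I-{i,j}. a k - a 1)) = c i 1 / 2 * (\<Prod>k\<in>I-{i,1}. a k - a 1)
         + (\<Sum>j\<in>I-{i}-{1}. c i j / 2 * (\<Prod>k\<in>I-{i,j}. a k - a 1))"
        by (rule sum.remove[OF _ i1]) (use fin in simp)
      also have "(\<Sum>j\<in>I-{i}-{1}. c i j / 2 * (\<Prod>k\<in>I-{i,j}. a k - a 1)) = 0"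
        using fin one that by (intro sum.neutral ballI) (auto simp: J_def intro!: z1)
      finally show ?thesis by (simp add: csym insert_commute)
    qed
    have C: "(\<Prod>k\<in>I-{1,j}. a k - a 1) = E / d j" if "j \<in> J" for j
    proof -
      have "I - {1,j} = J - {j}" by (auto simp: J_def)
      then show ?thesis using prod_rem1[of J j d, OF finJ that dnz[OF that]] by (simp add: E_def d_def)
    qed
    have "(\<Sum>i\<in>I. \<Sum>j\<in>I-{i}. c i j / 2 * (\<Prod>k\<in>I-{i,j}. a k - a 1))
       = (\<Sum>j\<in>J. c 1 j / 2 * (E / d j)) + (\<Sum>i\<in>J. c 1 i / 2 * (E / d i))"
    proof -
      have B': "(\<Sum>i\<in>J. \<Sum>j\<in>I-{i}. c i j / 2 * (\<Prod>k\<in>I-{i,j}. a k - a 1)) = (\<Sum>i\<in>J. c 1 i / 2 * (E / d i))"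
        by (rule sum.cong[OF refl]) (simp only: B C)
      have C': "(\<Sum>j\<in>J. c 1 j / 2 * (\<Prod>k\<in>I-{1,j}. a k - a 1)) = (\<Sum>j\<in>J. c 1 j / 2 * (E / d j))"
        by (rule sum.cong[OF refl]) (simp only: C)
      show ?thesis unfolding A B' C' ..
    qed
    also have "\<dots> = (\<Sum>j\<in>J. c 1 j * (E / d j))"
      by (simp add: sum.distrib[symmetric] field_simps)
    finally show ?thesis .
  qed
  have "poly (PP I a x v) (a 1) = (v 1)^2 * E - (\<Sum>j\<in>J. c 1 j * (E / d j))"
    using s1 s2 unfolding poly_PP c_def by simp
  also have "\<dots> = E * ((v 1)^2 - (\<Sum>j\<in>J. c 1 j / d j))"
    by (simp add: algebra_simps sum_distrib_left sum_subtractf)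
  finally show ?thesis by (simp add: E_def J_def d_def c_def)
qed



lemma geom:
  fixes x y a :: "nat \<Rightarrow> real"
  assumes fin: "finite I" and one: "1 \<in> I" and a1: "0 < a 1"
    and aJ: "\<And>j. j \<in> I - {1} \<Longrightarrow> a 1 < a j"
    and qx: "(\<Sum>i\<in>I. (x i)^2 / a i) = 1" and qy: "(\<Sum>i\<in>I. (y i)^2 / a i) = 1"
    and G: "0 < ((y 1 - x 1))^2 - (\<Sum>j\<in>I-{1}. (x 1 * (y j - x j) - x j * (y 1 - x 1))^2 / (a j - a 1))"
  shows "x 1 * y 1 < 0"
proof -
  define v where "v i = y i - x i" for i
  define J where "J = I - {1}"
  have apos: "i \<in> I \<Longrightarrow> 0 < a i" for i using aJ[of i] a1 by (cases "i = 1") auto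
  have G': "0 < (v 1)^2 - (\<Sum>j\<in>J. (x 1 * v j - x j * v 1)^2 / (a j - a 1))"
    using G by (simp add: v_def J_def)
  have v1: "v 1 \<noteq> 0"
  proof
    assume h: "v 1 = 0"
    have "0 \<le> (\<Sum>j\<in>J. (x 1 * v j - x j * v 1)^2 / (a j - a 1))"
    proof (intro sum_nonneg divide_nonneg_nonneg)
      fix j assume "j \<in> J"
      then have "a 1 < a j" using aJ unfolding J_def by blast
      then show "0 \<le> a j - a 1" by simp
    qed simp
    then show False using G' h by simp
  qed
  define t where "t = - x 1 / v 1"
  define z where "z i = x i + t * v i" for i
  have z1: "z 1 = 0" using v1 by (simp add: z_def t_def)
  have zj: "(z j)^2 = (x 1 * v j - x j * v 1)^2 / (v 1)^2" for j
    using v1 by (simp add: z_def t_def field_simps power2_eq_square)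
  have "(\<Sum>j\<in>J. (z j)^2 / (a j - a 1)) = (\<Sum>j\<in>J. (x 1 * v j - x j * v 1)^2 / (a j - a 1)) / (v 1)^2"
    by (simp add: zj sum_divide_distrib mult.commute)
  also have "\<dots> < 1" using G' v1 by (simp add: divide_less_eq)
  finally have zb: "(\<Sum>j\<in>J. (z j)^2 / (a j - a 1)) < 1" .
  have "(\<Sum>i\<in>I. (z i)^2 / a i) = (z 1)^2 / a 1 + (\<Sum>j\<in>J. (z j)^2 / a j)"
    unfolding J_def by (rule sum.remove[OF fin one])
  also have "\<dots> = (\<Sum>j\<in>J. (z j)^2 / a j)" using z1 by simp
  also have "\<dots> \<le> (\<Sum>j\<in>J. (z j)^2 / (a j - a 1))"
  proof (rule sum_mono)
    fix j assume "j \<in> J"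
    then have "a 1 < a j" "0 < a j - a 1" using aJ by (auto simp: J_def)
    then show "(z j)^2 / a j \<le> (z j)^2 / (a j - a 1)"
      using a1 by (intro divide_left_mono) auto
  qed
  finally have qz: "(\<Sum>i\<in>I. (z i)^2 / a i) < 1" using zb by linarith
  define A0 where "A0 = (\<Sum>i\<in>I. x i * v i / a i)"
  define B0 where "B0 = (\<Sum>i\<in>I. (v i)^2 / a i)"
  have expand: "(\<Sum>i\<in>I. (x i + s * v i)^2 / a i) = 1 + 2 * s * A0 + s^2 * B0" for s
  proof -
    have "(\<Sum>i\<in>I. (x i + s * v i)^2 / a i) = (\<Sum>i\<in>I. (x i)^2 / a i + 2 * s * (x i * v i / a i) + s^2 * ((v i)^2 / a i))"
      by (intro sum.cong refl) (simp add: power2_eq_square add_divide_distrib algebra_simps)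
    also have "\<dots> = 1 + 2 * s * A0 + s^2 * B0"
      by (simp add: sum.distrib sum_distrib_left qx A0_def B0_def)
    finally show ?thesis .
  qed
  have "(\<Sum>i\<in>I. (x i + 1 * v i)^2 / a i) = 1" using qy by (simp add: v_def)
  then have AB: "2 * A0 + B0 = 0" using expand[of 1] by simp
  have "1 + 2 * t * A0 + t^2 * B0 < 1" using qz expand[of t] by (simp add: z_def)
  moreover have "A0 = - B0 / 2" using AB by linarith
  ultimately have "B0 * (t * (t - 1)) < 0" by (simp add: power2_eq_square algebra_simps)
  moreover have "0 \<le> B0" unfolding B0_def using apos by (intro sum_nonneg) (simp add: less_imp_le)
  ultimately have tt: "t * (t - 1) < 0"
    by (metis mult_nonneg_nonneg not_less mult_pos_neg order_le_less)
  have "x 1 = - t * v 1" "y 1 = (1 - t) * v 1" using v1 v_def[of 1] by (simp_all add: t_def v_def field_simps)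
  then have "x 1 * y 1 = (t * (t - 1)) * (v 1)^2" by (simp only: power2_eq_square) (simp add: algebra_simps)
  moreover have "0 < (v 1)^2" using v1 by simp
  ultimately show ?thesis using tt by (simp add: mult_neg_pos)
qed



lemma key:
  fixes x y a lam :: "nat \<Rightarrow> real"
  assumes a1: "0 < a 1" and aJ: "\<And>j. j \<in> {1..n+1} - {1} \<Longrightarrow> a 1 < a j"
    and xq: "x \<in> confocal n a 0" and yq: "y \<in> confocal n a 0" and xy: "x \<noteq> y"
    and caus: "caustic_params n a x y = lam ` {1..n}"
    and inj: "inj_on lam {1..n}" and big: "\<And>i. i \<in> {1..n} \<Longrightarrow> a 1 < lam i"
  shows "x 1 * y 1 < 0"
proof -
  define I where "I = {1..n+1}"
  define v where "v i = y i - x i" for i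
  define P where "P = PP I a x v"
  have fin: "finite I" and one: "1 \<in> I" by (auto simp: I_def)
  have aJ': "\<And>j. j \<in> I - {1} \<Longrightarrow> a 1 < a j" using aJ by (simp add: I_def)
  have age: "i \<in> I \<Longrightarrow> a 1 \<le> a i" for i using aJ'[of i] by (cases "i = 1") auto
  have apos: "i \<in> I \<Longrightarrow> 0 < a i" for i using age[of i] a1 by linarith
  have qx: "(\<Sum>i\<in>I. (x i)^2 / a i) = 1" using xq by (simp add: confocal_def I_def)
  have qy: "(\<Sum>i\<in>I. (y i)^2 / a i) = 1" using yq by (simp add: confocal_def I_def)
  have vnz: "\<exists>i\<in>I. v i \<noteq> 0"
  proof (rule ccontr)
    assume "\<not> ?thesis"
    then have "\<forall>i\<in>I. x i = y i" by (simp add: v_def)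
    moreover have "is_point n x" "is_point n y" using xq yq by (auto simp: confocal_def)
    ultimately have "x = y" by (auto simp: is_point_def I_def fun_eq_iff)
    then show False using xy by simp
  qed
  define A0 where "A0 = (\<Sum>i\<in>I. x i * v i / a i)"
  define B0 where "B0 = (\<Sum>i\<in>I. (v i)^2 / a i)"
  have B0pos: "0 < B0"
  proof -
    obtain i where i: "i \<in> I" "v i \<noteq> 0" using vnz by blast
    have "0 < (v i)^2 / a i" using i apos by simp
    also have "\<dots> \<le> B0" unfolding B0_def using fin i apos
      by (intro member_le_sum) (auto simp: less_imp_le)
    finally show ?thesis .
  qed
  have "(\<Sum>i\<in>I. (y i)^2 / a i) = (\<Sum>i\<in>I. (x i)^2 / a i + 2 * (x i * v i / a i) + (v i)^2 / a i)"
    by (intro sum.cong refl) (simp add: v_def power2_eq_square add_divide_distrib diff_divide_distrib algebra_simps)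
  also have "\<dots> = 1 + 2 * A0 + B0" by (simp add: sum.distrib sum_distrib_left qx A0_def B0_def)
  finally have AB: "2 * A0 + B0 = 0" using qy by simp
  have Ptan: "poly P \<mu> = 0 \<longleftrightarrow> \<mu> \<in> caustic_params n a x y" if np: "\<And>k. k \<in> I \<Longrightarrow> a k \<noteq> \<mu>" for \<mu>
  proof -
    have pnz: "(\<Prod>k\<in>I. a k - \<mu>) \<noteq> 0" using np fin by (simp)
    have eq: "poly P \<mu> = (\<Prod>k\<in>I. a k - \<mu>) *
     ((\<Sum>i\<in>I. x i * v i / (a i - \<mu>))^2 - (\<Sum>i\<in>I. (v i)^2 / (a i - \<mu>)) * ((\<Sum>i\<in>I. (x i)^2 / (a i - \<mu>)) - 1))"
      unfolding P_def by (rule poly_PP_nonpole[OF fin np])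
    have "\<mu> \<in> caustic_params n a x y \<longleftrightarrow> (\<Sum>i\<in>I. x i * v i / (a i - \<mu>))^2 = (\<Sum>i\<in>I. (v i)^2 / (a i - \<mu>)) * ((\<Sum>i\<in>I. (x i)^2 / (a i - \<mu>)) - 1)"
      unfolding caustic_params_def line_tangent_def mem_Collect_eq I_def[symmetric] v_def[symmetric]
      using np by blast
    then show ?thesis using eq pnz by simp
  qed
  have capole: "\<mu> \<in> caustic_params n a x y \<Longrightarrow> k \<in> I \<Longrightarrow> a k \<noteq> \<mu>" for \<mu> k
    by (auto simp: caustic_params_def line_tangent_def I_def)
  have P0: "0 < poly P 0"
  proof -
    have np: "\<And>k. k \<in> I \<Longrightarrow> a k \<noteq> 0" using apos by force
    have "poly P 0 = (\<Prod>k\<in>I. a k) * A0^2"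
      using poly_PP_nonpole[OF fin np, where x=x and v=v] by (simp add: qx A0_def P_def)
    moreover have "0 < (\<Prod>k\<in>I. a k)" using apos by (intro prod_pos) auto
    moreover have "A0 \<noteq> 0" using AB B0pos by auto
    ultimately show ?thesis by simp
  qed
  have Pnz: "P \<noteq> 0" using P0 by auto
  have lamroot: "poly P (lam i) = 0" if "i \<in> {1..n}" for i
  proof -
    have c: "lam i \<in> caustic_params n a x y" using caus that by auto
    show ?thesis using Ptan[OF capole[OF c]] c by blast
  qed
  have Pa1nz: "poly P (a 1) \<noteq> 0"
  proof
    assume h: "poly P (a 1) = 0"
    have sub: "insert (a 1) (lam ` {1..n}) \<subseteq> {\<mu>. poly P \<mu> = 0}" using h lamroot by auto
    have notin: "a 1 \<notin> lam ` {1..n}" using big by force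
    have ce: "card (insert (a 1) (lam ` {1..n})) = Suc n"
      using notin card_image[OF inj] by simp
    have "Suc n \<le> card {\<mu>. poly P \<mu> = 0}"
      using card_mono[OF poly_roots_finite[OF Pnz] sub] ce by simp
    also have "\<dots> \<le> degree P" by (rule card_poly_roots_bound[OF Pnz])
    also have "\<dots> \<le> n" unfolding P_def by (rule degree_PP) (auto simp: I_def)
    finally show False by simp
  qed
  have Pa1: "0 < poly P (a 1)"
  proof (rule ccontr)
    assume "\<not> ?thesis"
    then have "poly P (a 1) < 0" using Pa1nz by simp
    then obtain \<mu> where mu: "0 < \<mu>" "\<mu> < a 1" "poly P \<mu> = 0"
      using poly_IVT_neg[OF a1 P0] by blast
    have np: "\<And>k. k \<in> I \<Longrightarrow> a k \<noteq> \<mu>" using age mu by force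
    have "\<mu> \<in> lam ` {1..n}" using Ptan[OF np] mu caus by simp
    then show False using big mu by force
  qed
  have npa: "\<And>k. k \<in> I - {1} \<Longrightarrow> a k \<noteq> a 1" using aJ' by force
  have pp: "0 < (\<Prod>k\<in>I-{1}. a k - a 1)" using aJ' by (intro prod_pos) auto
  have e: "poly P (a 1) = (\<Prod>k\<in>I-{1}. a k - a 1) *
     ((v 1)^2 - (\<Sum>j\<in>I-{1}. (x 1 * v j - x j * v 1)^2 / (a j - a 1)))"
    unfolding P_def by (rule poly_PP_a1[where I=I and a=a, OF fin one npa])
  have G: "0 < (v 1)^2 - (\<Sum>j\<in>I-{1}. (x 1 * v j - x j * v 1)^2 / (a j - a 1))"
    using zero_less_mult_pos[OF _ pp] Pa1 unfolding e by blast
  show ?thesis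
  proof (rule geom[OF fin one a1 aJ' qx qy])
    show "0 < (y 1 - x 1)^2 - (\<Sum>j\<in>I-{1}. (x 1 * (y j - x j) - x j * (y 1 - x 1))^2 / (a j - a 1))"
      using G unfolding v_def by assumption
  qed
qed



lemma strict_chain:
  fixes f :: "nat \<Rightarrow> real"
  assumes "\<And>i. i \<in> {1..<N} \<Longrightarrow> f i < f (Suc i)"
  shows "1 \<le> i \<Longrightarrow> i < j \<Longrightarrow> j \<le> N \<Longrightarrow> f i < f j"
proof (induction j)
  case 0 then show ?case by simp
next
  case (Suc j)
  show ?case
  proof (cases "i = j")
    case True then show ?thesis using assms Suc.prems by auto
  next
    case False
    then have "f i < f j" using Suc by auto
    moreover have "f j < f (Suc j)" using assms Suc.prems False by auto
    ultimately show ?thesis by simp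
  qed
qed

lemma alternate:
  fixes s :: "nat \<Rightarrow> real"
  assumes "\<And>k. s k * s (Suc k) < 0"
  shows "0 < (-1)^k * s k * s 0"
proof (induction k)
  case 0 then show ?case using assms[of 0] by (auto simp: zero_less_mult_iff mult_less_0_iff)
next
  case (Suc k)
  have u: "0 < - (s k * s (Suc k))" using assms[of k] by simp
  have "0 < (- (s k * s (Suc k))) * ((-1)^k * s k * s 0)" using mult_pos_pos[OF u Suc.IH] .
  also have "\<dots> = ((-1)^(Suc k) * s (Suc k) * s 0) * (s k)^2" by (simp add: power2_eq_square algebra_simps)
  finally have h: "0 < ((-1)^(Suc k) * s (Suc k) * s 0) * (s k)^2" .
  have "0 \<le> (s k)^2" by simp
  then show ?case using h zero_less_mult_iff[of "(-1)^(Suc k) * s (Suc k) * s 0" "(s k)^2"] by linarith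
qed

theorem corollary1:
  fixes n :: nat and a :: "nat \<Rightarrow> real" and p :: "nat \<Rightarrow> nat \<Rightarrow> real"
    and lam :: "nat \<Rightarrow> real" and m :: nat
  assumes "n \<ge> 1"
    and "0 < a 1" and "\<And>i. i \<in> {1..n} \<Longrightarrow> a i < a (Suc i)"
    and "billiard_trajectory n a p"
    and "\<And>i. i \<in> {1..<n} \<Longrightarrow> lam i < lam (Suc i)"
    and "\<And>k. caustic_params n a (p k) (p (Suc k)) = lam ` {1..n}"
    and "0 < lam 1"
    and "\<And>i. i \<in> {1..n} \<Longrightarrow>
           lam i \<in> {(if i = 1 then 0 else a (i - 1))<..<a i} \<union> {a i<..<a (Suc i)}"
    and "odd m" and "\<And>k. p (k + m) = p k"
  shows "lam 1 \<in> {0<..<a 1}"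
proof (rule ccontr)
  assume neg: "lam 1 \<notin> {0<..<a 1}"
  have "lam 1 \<in> {0<..<a 1} \<union> {a 1<..<a (Suc 1)}" using assms(8)[of 1] assms(1) by simp
  then have l1: "a 1 < lam 1" using neg by auto
  have aS: "\<And>i. i \<in> {1..<n+1} \<Longrightarrow> a i < a (Suc i)" using assms(3) by auto
  have aJ: "\<And>j. j \<in> {1..n+1} - {1} \<Longrightarrow> a 1 < a j"
    using strict_chain[of "n+1" a, OF aS] by auto
  have lmono: "1 \<le> i \<Longrightarrow> i < j \<Longrightarrow> j \<le> n \<Longrightarrow> lam i < lam j" for i j
    using strict_chain[of n lam, OF assms(5)] by blast
  have big: "\<And>i. i \<in> {1..n} \<Longrightarrow> a 1 < lam i"
  proof -
    fix i assume i: "i \<in> {1..n}"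
    show "a 1 < lam i"
    proof (cases "i = 1")
      case True then show ?thesis using l1 by simp
    next
      case False then show ?thesis using lmono[of 1 i] i l1 by auto
    qed
  qed
  have inj: "inj_on lam {1..n}"
  proof (rule inj_onI)
    fix i j assume "i \<in> {1..n}" "j \<in> {1..n}" "lam i = lam j"
    then show "i = j" using lmono[of i j] lmono[of j i]
      by (cases i j rule: linorder_cases) auto
  qed
  have bt: "\<And>k. p k \<in> confocal n a 0" "\<And>k. p (Suc k) \<noteq> p k"
    using assms(4) unfolding billiard_trajectory_def by blast+
  have alt: "p k 1 * p (Suc k) 1 < 0" for k
    by (rule key[OF assms(2) aJ bt(1) bt(1) _ assms(6) inj big]) (use bt(2)[of k] in auto)
  have "0 < (-1)^m * p m 1 * p 0 1" using alternate[of "\<lambda>k. p k 1"] alt by blast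
  moreover have "p m = p 0" using assms(10)[of 0] by simp
  ultimately have "p 0 1 * p 0 1 < 0" using assms(9) by simp
  then show False by simp
qed


end
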